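(* Let $Q=\Diamond abcd$ be a convex quadrilateral with vertices $a,b,c,d$ in clockwise order, such that the diagonal $\overline{ac}$ is horizontal, $|ac|=1$, and $1$ is the diameter of $Q$. Let the smallest axis-parallel rectangle containing $Q$ have horizontal side length $1$ and vertical side length $W$ with $0<W\le 1$, with $a$ on its left side, $b$ on its top side, $c$ on its right side and $d$ on its bottom side. Let $r=\frac14\sqrt{1+4W^2}$. Assume $|ab|\ge \frac{\sqrt{1+W^2}}{2}$. If one of the edges adjacent to $\overline{ab}$ (namely $\overline{bc}$ or $\overline{ad}$) has length at least $\frac{\sqrt{1+W^2}}{2}$ and $W\ge \frac{1}{\sqrt3}$, then $r\le 1.6\, r_{opt}(Q)$.
   Context: For a compact set $X\subset\mathbb{R}^2$, $r_{opt}(X)$ denotes the minimum $r$ such that two closed disks of radius $r$ have union containing $X$. *)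

theory Defs
  imports "HOL-Analysis.Analysis"
begin

text \<open>Points of the plane are pairs of reals; the product metric on real \<times> real is Euclidean.\<close>

text \<open>Signed cross product (q - p) x (s - p); negative iff p, q, s make a clockwise turn.\<close>
definition cross3 :: "real \<times> real \<Rightarrow> real \<times> real \<Rightarrow> real \<times> real \<Rightarrow> real" where
  "cross3 p q s = (fst q - fst p) * (snd s - snd p) - (snd q - snd p) * (fst s - fst p)"

definition convex_quad_cw :: "real \<times> real \<Rightarrow> real \<times> real \<Rightarrow> real \<times> real \<Rightarrow> real \<times> real \<Rightarrow> bool" where
  "convex_quad_cw a b c d \<longleftrightarrow>
     cross3 a b c < 0 \<and> cross3 b c d < 0 \<and> cross3 c d a < 0 \<and> cross3 d a b < 0"

definition r_opt :: "(real \<times> real) set \<Rightarrow> real" where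
  "r_opt X = Inf {r. r \<ge> 0 \<and> (\<exists>p q. X \<subseteq> cball p r \<union> cball q r)}"

end

theory Submission
  imports Defs
begin

lemma three_pts:
  assumes X: "x \<in> X" "y \<in> X" "z \<in> X" and bX: "bounded X"
    and d: "m \<le> dist x y" "m \<le> dist y z" "m \<le> dist x z"
  shows "m / 2 \<le> r_opt X"
  unfolding r_opt_def
proof (rule cInf_greatest)
  obtain r x0 where r: "X \<subseteq> cball x0 r" and "0 \<le> r"
    using bX unfolding bounded_subset_cball by blast
  then show "{r. r \<ge> 0 \<and> (\<exists>p q. X \<subseteq> cball p r \<union> cball q r)} \<noteq> {}"
    using r by blast
next
  fix r assume "r \<in> {r. r \<ge> 0 \<and> (\<exists>p q. X \<subseteq> cball p r \<union> cball q r)}"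
  then obtain p q where c: "X \<subseteq> cball p r \<union> cball q r" by auto
  have two: "m \<le> 2 * r" if "u \<in> cball o' r" "v \<in> cball o' r" "m \<le> dist u v" for u v o'
  proof -
    have "dist u v \<le> dist o' u + dist o' v" by (metis dist_commute dist_triangle)
    then show ?thesis using that by (auto simp: mem_cball)
  qed
  show "m / 2 \<le> r"
  proof -
    have cx: "x \<in> cball p r \<or> x \<in> cball q r" using c X(1) by blast
    have cy: "y \<in> cball p r \<or> y \<in> cball q r" using c X(2) by blast
    have cz: "z \<in> cball p r \<or> z \<in> cball q r" using c X(3) by blast
    have "m \<le> 2 * r"
      using cx cy cz
    proof (elim disjE)
    qed (use two d in \<open>meson dist_commute\<close>)+
    then show ?thesis by simp
  qed
qed

theorem lemma5:
  fixes a b c d :: "real \<times> real" and W :: real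
  assumes quad: "convex_quad_cw a b c d"
    and horiz: "snd a = snd c"
    and ac: "dist a c = 1"
    and diam: "diameter (convex hull {a, b, c, d}) = 1"
    and rect_x: "\<forall>p\<in>{a, b, c, d}. fst a \<le> fst p \<and> fst p \<le> fst c"
    and rect_y: "\<forall>p\<in>{a, b, c, d}. snd d \<le> snd p \<and> snd p \<le> snd b"
    and width: "fst c - fst a = 1"
    and height: "snd b - snd d = W"
    and W_pos: "0 < W" and W_le: "W \<le> 1"
    and ab: "dist a b \<ge> sqrt (1 + W\<^sup>2) / 2"
    and adj: "dist b c \<ge> sqrt (1 + W\<^sup>2) / 2 \<or> dist a d \<ge> sqrt (1 + W\<^sup>2) / 2"
    and W_ge: "W \<ge> 1 / sqrt 3"
  shows "sqrt (1 + 4 * W\<^sup>2) / 4 \<le> 1.6 * r_opt (convex hull {a, b, c, d})"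
proof -
  define s where "s = sqrt (1 + W\<^sup>2) / 2"
  define X where "X = convex hull {a, b, c, d}"
  have bX: "bounded X" unfolding X_def
    by (simp add: compact_imp_bounded compact_convex_hull)
  have inX: "a \<in> X" "b \<in> X" "c \<in> X" "d \<in> X" unfolding X_def
    by (auto intro: hull_inc)
  have s1: "s \<le> 1"
  proof -
    have "sqrt (1 + W\<^sup>2) \<le> sqrt 4" using W_le W_pos
      by (intro real_sqrt_le_mono) (smt (verit) power_le_one)
    then show ?thesis by (simp add: s_def)
  qed
  have sW: "s \<le> W"
  proof -
    have "1 / sqrt 3 \<le> W" by fact
    hence "1 \<le> W * sqrt 3" by (simp add: field_simps)
    hence "1 \<le> (W * sqrt 3)^2" by (simp add: power_mono)
    hence "1 \<le> 3 * W^2" by (simp add: power_mult_distrib)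
    hence "1 + W^2 \<le> (2*W)^2" by simp
    hence "sqrt (1 + W^2) \<le> 2 * W" using W_pos by (metis real_le_lsqrt less_le zero_le_mult_iff zero_le_numeral)
    then show ?thesis by (simp add: s_def)
  qed
  have bd: "W \<le> dist b d"
  proof -
    have "dist (snd b) (snd d) \<le> dist b d" by (rule dist_snd_le)
    then show ?thesis using height by (simp add: dist_real_def)
  qed
  have low: "s / 2 \<le> r_opt X"
  proof (cases "dist b c \<ge> s")
    case True
    then show ?thesis
      using three_pts[OF inX(1) inX(2) inX(3) bX, of s] ab ac s1 s_def by (simp add: dist_commute)
  next
    case False
    then have "dist a d \<ge> s" using adj s_def by auto
    then show ?thesis
      using three_pts[OF inX(1) inX(2) inX(4) bX, of s] ab bd sW s_def by simp
  qed
  have fin: "sqrt (1 + 4 * W\<^sup>2) / 4 \<le> 1.6 * (s / 2)"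
  proof -
    have "sqrt (1 + 4 * W\<^sup>2) \<le> sqrt ((1.6 * sqrt (1 + W\<^sup>2))^2)"
      using W_le W_pos proof (intro real_sqrt_le_mono)
      have "W^2 \<le> 1" using W_le W_pos by (simp add: power_le_one)
      moreover have "(1.6 * sqrt (1 + W\<^sup>2))^2 = 2.56 * (1 + W^2)"
        by (simp only: power_mult_distrib real_sqrt_pow2[OF add_nonneg_nonneg[OF zero_le_one zero_le_power2]]) (simp add: power2_eq_square algebra_simps)
      ultimately show "1 + 4 * W\<^sup>2 \<le> (1.6 * sqrt (1 + W\<^sup>2))^2" by simp
    qed
    also have "\<dots> = 1.6 * sqrt (1 + W\<^sup>2)" by simp
    finally show ?thesis by (simp add: s_def)
  qed
  show ?thesis using fin low X_def by simp
qed

end
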